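(* Let $q\in(0,1)$, $\alpha\in(-1,1)$, $\beta<1$ real, and $n\ge-1$ an integer. Then $\psi_n^+$ is analytic in the punctured unit disc $\{z\in\mathbb{C}:0<|z|<1\}$, and its zeros there are all real, simple, and symmetrically distributed with respect to the origin. Moreover, between any two neighboring zeros of $\psi_n^+$ in $(0,1)$ there is exactly one zero of $\psi_{n+1}^+$.
   Context: $(a;q)_n:=\prod_{j=0}^{n-1}(1-aq^j)$, $n\in\mathbb{N}_0\cup\{\infty\}$. For $z\ne0$ and integers $n\ge-1$, \[ \psi_n^+(z):=z^n\sum_{k=0}^\infty\frac{(q^{k+1}z^2;q)_\infty}{(q;q)_k}c_k(z)q^{(n+1)k},\qquad c_k(z):=\prod_{j=0}^{k-1}\bigl(\alpha(1+z^2q^{2j})-\beta q^j(1+z^2)\bigr), \] i.e. $\psi_n^+(z)=z^n(qz^2;q)_\infty\,{}_2\phi_1(z\tau,z\tau^{-1};qz^2;q,\alpha q^{n+1})$ with $\alpha(\tau+\tau^{-1})=\beta(z+z^{-1})$. *)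

theory Defs
  imports "HOL-Complex_Analysis.Complex_Analysis"
begin

definition qpoch :: "complex \<Rightarrow> complex \<Rightarrow> nat \<Rightarrow> complex" where
  "qpoch a q n = (\<Prod>j<n. 1 - a * q ^ j)"

definition qpoch_inf :: "complex \<Rightarrow> complex \<Rightarrow> complex" where
  "qpoch_inf a q = (\<Prod>j. 1 - a * q ^ j)"

definition cfun :: "real \<Rightarrow> real \<Rightarrow> real \<Rightarrow> nat \<Rightarrow> complex \<Rightarrow> complex" where
  "cfun q \<alpha> \<beta> k z = (\<Prod>j<k. of_real \<alpha> * (1 + z\<^sup>2 * of_real q ^ (2*j))
        - of_real \<beta> * of_real q ^ j * (1 + z\<^sup>2))"

definition psi_plus :: "real \<Rightarrow> real \<Rightarrow> real \<Rightarrow> int \<Rightarrow> complex \<Rightarrow> complex" where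
  "psi_plus q \<alpha> \<beta> n z = z powi n *
     (\<Sum>k. qpoch_inf (of_real q ^ (k+1) * z\<^sup>2) (of_real q) / qpoch (of_real q) (of_real q) k
           * cfun q \<alpha> \<beta> k z * of_real q ^ (nat (n+1) * k))"

end

theory Submission
  imports Defs
begin


definition Pq :: "real \<Rightarrow> complex \<Rightarrow> complex" where
  "Pq q u = qpoch_inf u (of_real q)"

context
  fixes q :: real
  assumes q0: "0 < q" and q1: "q < 1"
begin

lemma Pq_abs_conv: "abs_convergent_prod (\<lambda>j. 1 - (u::complex) * of_real q ^ j)"
proof -
  have "summable (\<lambda>j. norm u * q ^ j)"
    using q0 q1 by (intro summable_mult summable_geometric) auto
  then have "summable (\<lambda>j. norm ((1 - u * of_real q ^ j) - 1))"
    by (simp add: norm_mult norm_power)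
  then show ?thesis
    using abs_convergent_prod_conv_summable by blast
qed

lemma Pq_has_prod: "(\<lambda>j. 1 - (u::complex) * of_real q ^ j) has_prod Pq q u"
  unfolding Pq_def qpoch_inf_def
  using Pq_abs_conv abs_convergent_prod_imp_convergent_prod convergent_prod_has_prod by blast

lemma Pq_rec: "Pq q u = (1 - u) * Pq q (of_real q * u)"
proof -
  have "(\<lambda>j. 1 - (of_real q * u) * of_real q ^ j) has_prod Pq q (of_real q * u)"
    by (rule Pq_has_prod)
  then have "(\<lambda>j. 1 - u * of_real q ^ (Suc j)) has_prod Pq q (of_real q * u)"
    by (simp add: mult_ac)
  then have "(\<lambda>j. 1 - u * of_real q ^ j) has_prod (Pq q (of_real q * u) * (1 - u))"
    using has_prod_Suc_imp[where f="\<lambda>j. 1 - u * of_real q ^ j"] by simp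
  then show ?thesis using Pq_has_prod[of u] has_prod_unique2 by (metis mult.commute)
qed

lemma Pq_nonzero: assumes "norm u < 1" shows "Pq q u \<noteq> 0"
proof
  assume "Pq q u = 0"
  then obtain j where j: "1 - u * of_real q ^ j = 0"
    using has_prod_eq_0_iff[OF Pq_has_prod[of u]] by auto
  have "norm (u * of_real q ^ j) < 1"
  proof -
    have "norm (u * of_real q ^ j) = norm u * q ^ j" using q0 by (simp add: norm_mult norm_power)
    also have "\<dots> \<le> norm u" using q0 q1 by (intro mult_left_le power_le_one) auto
    finally show ?thesis using assms by simp
  qed
  with j show False by (metis norm_one eq_iff_diff_eq_0 less_irrefl)
qed

lemma Pq_cnj: "Pq q (cnj u) = cnj (Pq q u)"
proof -
  have c: "convergent_prod (\<lambda>j. 1 - v * of_real q ^ j)" for v :: complex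
    using Pq_abs_conv abs_convergent_prod_imp_convergent_prod by blast
  have "(\<lambda>n. \<Prod>i\<le>n. 1 - u * of_real q ^ i) \<longlonglongrightarrow> Pq q u"
    using convergent_prod_LIMSEQ[OF c[of u]] unfolding Pq_def qpoch_inf_def .
  then have "(\<lambda>n. cnj (\<Prod>i\<le>n. 1 - u * of_real q ^ i)) \<longlonglongrightarrow> cnj (Pq q u)"
    by (rule tendsto_cnj)
  moreover have "(\<lambda>n. \<Prod>i\<le>n. 1 - cnj u * of_real q ^ i) \<longlonglongrightarrow> Pq q (cnj u)"
    using convergent_prod_LIMSEQ[OF c[of "cnj u"]] unfolding Pq_def qpoch_inf_def .
  moreover have "(\<lambda>n. cnj (\<Prod>i\<le>n. 1 - u * of_real q ^ i)) = (\<lambda>n. \<Prod>i\<le>n. 1 - cnj u * of_real q ^ i)"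
    by (simp add: cnj_prod)
  ultimately show ?thesis
    using LIMSEQ_unique by metis
qed

lemma Pq_holo: "Pq q holomorphic_on UNIV"
proof (rule holomorphic_uniform_sequence[where f="\<lambda>N (u::complex). \<Prod>j<N. 1 - u * of_real q ^ j"])
  fix z :: complex
  define R where "R = norm z + 1"
  define PP where "PP = (\<lambda>N (u::complex). \<Prod>j<N. 1 - u * of_real q ^ j)"
  have uc: "uniformly_convergent_on (cball 0 R) PP"
    unfolding PP_def
    apply (rule uniformly_convergent_on_prod'[where f="\<lambda>j u. 1 - u * of_real q ^ j"])
      apply (auto intro!: continuous_intros)[2]
    apply (rule Weierstrass_m_test'[where M="\<lambda>j. R * q ^ j"])
     apply (simp add: norm_mult norm_power abs_mult power_abs abs_of_pos q0 mult_right_mono)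
    using q0 q1 by (intro summable_mult summable_geometric) auto
  then obtain g where g: "uniform_limit (cball 0 R) PP g sequentially"
    unfolding uniformly_convergent_on_def by blast
  have gP: "g u = Pq q u" if "u \<in> cball 0 R" for u
  proof -
    have "(\<lambda>n. PP n u) \<longlonglongrightarrow> g u"
      by (rule tendsto_uniform_limitI[OF g that])
    then have "(\<lambda>n. PP (Suc n) u) \<longlonglongrightarrow> g u"
      by (rule LIMSEQ_Suc)
    moreover have "(\<lambda>n. PP (Suc n) u) \<longlonglongrightarrow> Pq q u"
      using convergent_prod_LIMSEQ[OF abs_convergent_prod_imp_convergent_prod[OF Pq_abs_conv[of u]]]
      unfolding lessThan_Suc_atMost Pq_def qpoch_inf_def PP_def .
    ultimately show "g u = Pq q u" by (rule LIMSEQ_unique)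
  qed
  have "uniform_limit (cball 0 R) PP (Pq q) sequentially"
    using g uniform_limit_cong'[of "cball 0 R" PP PP g "Pq q" sequentially] gP by blast
  then have "uniform_limit (cball z 1) PP (Pq q) sequentially"
    by (rule uniform_limit_on_subset) (simp add: cball_subset_cball_iff R_def)
  then show "\<exists>d>0. cball z d \<subseteq> UNIV \<and> uniform_limit (cball z d) (\<lambda>N (u::complex). \<Prod>j<N. 1 - u * of_real q ^ j) (Pq q) sequentially"
    unfolding PP_def by (intro exI[of _ 1]) auto
qed (auto intro!: holomorphic_intros)

end


definition tk :: "real \<Rightarrow> real \<Rightarrow> real \<Rightarrow> nat \<Rightarrow> complex \<Rightarrow> complex" where
  "tk q \<alpha> \<beta> k z = Pq q (of_real q ^ (k+1) * z\<^sup>2) / qpoch (of_real q) (of_real q) k * cfun q \<alpha> \<beta> k z"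

definition Ser :: "real \<Rightarrow> real \<Rightarrow> real \<Rightarrow> nat \<Rightarrow> complex \<Rightarrow> complex" where
  "Ser q \<alpha> \<beta> j z = (\<Sum>k. tk q \<alpha> \<beta> k z * of_real q ^ (j*k))"

definition rho :: "real \<Rightarrow> real \<Rightarrow> real \<Rightarrow> nat \<Rightarrow> real" where
  "rho q \<alpha> \<beta> j = (\<bar>\<alpha>\<bar> * (1 + (q^j)\<^sup>2) + 2 * \<bar>\<beta>\<bar> * q^j) / (1 - q * q^j)"

definition Mk :: "real \<Rightarrow> real \<Rightarrow> real \<Rightarrow> nat \<Rightarrow> real" where
  "Mk q \<alpha> \<beta> k = (\<Prod>j<k. rho q \<alpha> \<beta> j)"

definition PB :: "real \<Rightarrow> real" where
  "PB q = (SOME B. \<forall>u. norm u \<le> 1 \<longrightarrow> norm (Pq q u) \<le> B)"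

lemma psi_plus_Ser: "psi_plus q \<alpha> \<beta> n z = z powi n * Ser q \<alpha> \<beta> (nat (n+1)) z"
  by (simp add: psi_plus_def Ser_def tk_def Pq_def)

context
  fixes q \<alpha> \<beta> :: real
  assumes q0: "0 < q" and q1: "q < 1" and a1: "-1 < \<alpha>" and a2: "\<alpha> < 1" and b1: "\<beta> < 1"
begin

lemma PB_bound: "norm u \<le> 1 \<Longrightarrow> norm (Pq q u) \<le> PB q"
proof -
  have "compact (Pq q ` cball 0 1)"
    using Pq_holo[OF q0 q1] holomorphic_on_imp_continuous_on
    by (intro compact_continuous_image) (auto intro: continuous_on_subset)
  then have "bounded (Pq q ` cball 0 1)" by (rule compact_imp_bounded)
  then obtain B where B: "\<forall>x\<in>Pq q ` cball 0 1. norm x \<le> B" unfolding bounded_iff by blast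
  have "\<forall>u. norm u \<le> 1 \<longrightarrow> norm (Pq q u) \<le> B"
  proof (intro allI impI)
    fix u :: complex assume "norm u \<le> 1"
    then have "u \<in> cball 0 1" by simp
    then show "norm (Pq q u) \<le> B" using B by blast
  qed
  then have "\<exists>B. \<forall>u. norm u \<le> 1 \<longrightarrow> norm (Pq q u) \<le> B" by blast
  then have "\<forall>u. norm u \<le> 1 \<longrightarrow> norm (Pq q u) \<le> PB q"
    unfolding PB_def by (rule someI_ex)
  then show "norm u \<le> 1 \<Longrightarrow> norm (Pq q u) \<le> PB q" by blast
qed

lemma PB_nonneg: "0 \<le> PB q"
proof -
  have "norm (Pq q 0) \<le> PB q" by (rule PB_bound) simp
  then show ?thesis using norm_ge_zero[of "Pq q 0"] by linarith
qed

lemma qj_le1: "q ^ j \<le> 1"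
  using q0 q1 by (simp add: power_le_one)

lemma one_minus_pos: "0 < 1 - q * q ^ j"
proof -
  have "q * q ^ j \<le> q" using qj_le1[of j] q0 by (simp add: mult_left_le)
  then show ?thesis using q1 by linarith
qed

lemma rho_nonneg: "0 \<le> rho q \<alpha> \<beta> j"
  unfolding rho_def using one_minus_pos[of j] q0 by (intro divide_nonneg_pos) auto

lemma Mk_nonneg: "0 \<le> Mk q \<alpha> \<beta> k"
  unfolding Mk_def by (intro prod_nonneg) (auto intro: rho_nonneg)

lemma rho_lim: "rho q \<alpha> \<beta> \<longlonglongrightarrow> \<bar>\<alpha>\<bar>"
proof -
  have h: "(\<lambda>j. q ^ j) \<longlonglongrightarrow> 0" using q0 q1 by (intro LIMSEQ_power_zero) auto
  have "(\<lambda>j. (\<bar>\<alpha>\<bar> * (1 + (q^j)\<^sup>2) + 2 * \<bar>\<beta>\<bar> * q^j) / (1 - q * q^j)) \<longlonglongrightarrow>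
        (\<bar>\<alpha>\<bar> * (1 + 0\<^sup>2) + 2 * \<bar>\<beta>\<bar> * 0) / (1 - q * 0)"
    by (intro tendsto_intros h) auto
  then show ?thesis unfolding rho_def[abs_def] by simp
qed

lemma Mk_summable: "summable (Mk q \<alpha> \<beta>)"
proof -
  define c where "c = (1 + \<bar>\<alpha>\<bar>) / 2"
  have c1: "c < 1" using a1 a2 unfolding c_def by auto
  have "\<bar>\<alpha>\<bar> < c" using a1 a2 unfolding c_def by auto
  then have "eventually (\<lambda>j. rho q \<alpha> \<beta> j < c) sequentially"
    using rho_lim order_tendstoD(2) by blast
  then obtain N where N: "\<And>j. j \<ge> N \<Longrightarrow> rho q \<alpha> \<beta> j < c"
    by (auto simp: eventually_sequentially)
  show ?thesis
  proof (rule summable_ratio_test[OF c1, of N])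
    fix n assume "N \<le> n"
    then have "rho q \<alpha> \<beta> n \<le> c" using N by (simp add: less_imp_le)
    then have "rho q \<alpha> \<beta> n * Mk q \<alpha> \<beta> n \<le> c * Mk q \<alpha> \<beta> n"
      using Mk_nonneg by (intro mult_right_mono) auto
    then show "norm (Mk q \<alpha> \<beta> (Suc n)) \<le> c * norm (Mk q \<alpha> \<beta> n)"
      using Mk_nonneg[of n] Mk_nonneg[of "Suc n"] by (simp add: Mk_def mult.commute)
  qed
qed

lemma cfun_bound:
  assumes "norm z \<le> 1"
  shows "norm (cfun q \<alpha> \<beta> k z) \<le> (\<Prod>j<k. \<bar>\<alpha>\<bar> * (1 + (q^j)\<^sup>2) + 2 * \<bar>\<beta>\<bar> * q^j)"
proof -
  have fac: "norm (of_real \<alpha> * (1 + z\<^sup>2 * of_real q ^ (2*j)) - of_real \<beta> * of_real q ^ j * (1 + z\<^sup>2))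
      \<le> \<bar>\<alpha>\<bar> * (1 + (q^j)\<^sup>2) + 2 * \<bar>\<beta>\<bar> * q^j" for j
  proof -
    have z2: "norm (z\<^sup>2) \<le> 1" using assms by (simp add: norm_power power_le_one)
    have "norm (1 + z\<^sup>2 * of_real q ^ (2*j)) \<le> 1 + norm (z\<^sup>2) * q ^ (2*j)"
    proof -
      have "norm (1 + z\<^sup>2 * of_real q ^ (2*j)) \<le> norm (1::complex) + norm (z\<^sup>2 * of_real q ^ (2*j))"
        by (rule norm_triangle_ineq)
      also have "norm (z\<^sup>2 * of_real q ^ (2*j)) = norm (z\<^sup>2) * q ^ (2*j)"
        using q0 by (simp add: norm_mult norm_power)
      finally show ?thesis by simp
    qed
    also have "\<dots> \<le> 1 + 1 * q ^ (2*j)"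
      using z2 q0 by (intro add_left_mono mult_right_mono) auto
    also have "\<dots> = 1 + (q^j)\<^sup>2"
      by (simp add: power_mult[symmetric] mult.commute[of 2])
    finally have A: "norm (1 + z\<^sup>2 * of_real q ^ (2*j)) \<le> 1 + (q^j)\<^sup>2" .
    have B: "norm (1 + z\<^sup>2) \<le> 2"
      using z2 norm_triangle_ineq[of 1 "z\<^sup>2"] by simp
    have "norm (of_real \<alpha> * (1 + z\<^sup>2 * of_real q ^ (2*j)) - of_real \<beta> * of_real q ^ j * (1 + z\<^sup>2))
        \<le> norm (of_real \<alpha> * (1 + z\<^sup>2 * of_real q ^ (2*j))) + norm (of_real \<beta> * of_real q ^ j * (1 + z\<^sup>2))"
      by (rule norm_triangle_ineq4)
    also have "\<dots> = \<bar>\<alpha>\<bar> * norm (1 + z\<^sup>2 * of_real q ^ (2*j)) + \<bar>\<beta>\<bar> * q ^ j * norm (1 + z\<^sup>2)"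
      using q0 by (simp add: norm_mult norm_power)
    also have "\<dots> \<le> \<bar>\<alpha>\<bar> * (1 + (q^j)\<^sup>2) + \<bar>\<beta>\<bar> * q ^ j * 2"
      using A B q0 by (intro add_mono mult_left_mono) auto
    finally show ?thesis by simp
  qed
  have "norm (cfun q \<alpha> \<beta> k z) = (\<Prod>j<k. norm (of_real \<alpha> * (1 + z\<^sup>2 * of_real q ^ (2*j)) - of_real \<beta> * of_real q ^ j * (1 + z\<^sup>2)))"
    unfolding cfun_def by (rule prod_norm[symmetric])
  also have "\<dots> \<le> (\<Prod>j<k. \<bar>\<alpha>\<bar> * (1 + (q^j)\<^sup>2) + 2 * \<bar>\<beta>\<bar> * q^j)"
    by (intro prod_mono conjI norm_ge_zero fac)
  finally show ?thesis .
qed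

lemma qpoch_real: "qpoch (of_real q) (of_real q) k = of_real (\<Prod>j<k. 1 - q * q ^ j)"
  unfolding qpoch_def by simp

lemma tk_bound:
  assumes "norm z \<le> 1"
  shows "norm (tk q \<alpha> \<beta> k z) \<le> PB q * Mk q \<alpha> \<beta> k"
proof -
  have P: "norm (Pq q (of_real q ^ (k+1) * z\<^sup>2)) \<le> PB q"
  proof (rule PB_bound)
    have "norm (of_real q ^ (k+1) * z\<^sup>2) = q^(k+1) * norm z ^ 2"
      using q0 by (simp add: norm_mult norm_power)
    also have "\<dots> \<le> 1 * 1"
      using assms q0 q1 by (intro mult_mono power_le_one) auto
    finally show "norm (of_real q ^ (k+1) * z\<^sup>2) \<le> 1" by simp
  qed
  have "\<And>j. 0 < 1 - q * q ^ j" by (rule one_minus_pos)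
  then have pos: "0 < (\<Prod>j<k. 1 - q * q ^ j)"
    by (intro prod_pos) blast
  have nq: "norm (qpoch (of_real q) (of_real q) k) = (\<Prod>j<k. 1 - q * q ^ j)"
    unfolding qpoch_real norm_of_real using pos by simp
  have "norm (tk q \<alpha> \<beta> k z) = norm (Pq q (of_real q ^ (k+1) * z\<^sup>2)) * norm (cfun q \<alpha> \<beta> k z) / (\<Prod>j<k. 1 - q * q ^ j)"
    unfolding tk_def norm_mult norm_divide nq by simp
  also have "\<dots> \<le> PB q * (\<Prod>j<k. \<bar>\<alpha>\<bar> * (1 + (q^j)\<^sup>2) + 2 * \<bar>\<beta>\<bar> * q^j) / (\<Prod>j<k. 1 - q * q ^ j)"
    using pos P cfun_bound[OF assms, of k] PB_nonneg
    by (intro divide_right_mono mult_mono) auto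
  also have "\<dots> = PB q * Mk q \<alpha> \<beta> k"
    unfolding Mk_def rho_def by (simp add: prod_dividef)
  finally show ?thesis .
qed

lemma term_bound:
  assumes "norm z \<le> 1"
  shows "norm (tk q \<alpha> \<beta> k z * of_real q ^ (j*k)) \<le> PB q * Mk q \<alpha> \<beta> k"
proof -
  have "norm (tk q \<alpha> \<beta> k z * of_real q ^ (j*k)) = norm (tk q \<alpha> \<beta> k z) * q ^ (j*k)"
    using q0 by (simp add: norm_mult norm_power)
  also have "\<dots> \<le> PB q * Mk q \<alpha> \<beta> k * 1"
    using tk_bound[OF assms] q0 q1 PB_nonneg Mk_nonneg by (intro mult_mono power_le_one) auto
  finally show ?thesis by simp
qed

end


context
  fixes q \<alpha> \<beta> :: real
  assumes q0: "0 < q" and q1: "q < 1" and a1: "-1 < \<alpha>" and a2: "\<alpha> < 1" and b1: "\<beta> < 1"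
begin

lemma Mk_summable': "summable (\<lambda>k. PB q * Mk q \<alpha> \<beta> k)"
  using Mk_summable[OF q0 q1 a1 a2 b1] by (rule summable_mult)

lemma Ser_summable:
  assumes "norm z \<le> 1"
  shows "summable (\<lambda>k. norm (tk q \<alpha> \<beta> k z * of_real q ^ (j*k)))"
  by (rule summable_comparison_test[OF _ Mk_summable'])
     (use term_bound[OF q0 q1 a1 a2 b1 assms] in auto)

lemma Ser_sums:
  assumes "norm z \<le> 1"
  shows "(\<lambda>k. tk q \<alpha> \<beta> k z * of_real q ^ (j*k)) sums Ser q \<alpha> \<beta> j z"
  unfolding Ser_def using summable_norm_cancel[OF Ser_summable[OF assms]] by (simp add: summable_sums)

definition SB where "SB = (\<Sum>k. PB q * Mk q \<alpha> \<beta> k)"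

lemma SB_nonneg: "0 \<le> SB"
  unfolding SB_def using PB_nonneg[OF q0 q1 a1 a2 b1] Mk_nonneg[OF q0 q1 a1 a2 b1]
  by (intro suminf_nonneg Mk_summable') auto

lemma Ser_bound:
  assumes "norm z \<le> 1"
  shows "norm (Ser q \<alpha> \<beta> j z) \<le> SB"
proof -
  have "norm (Ser q \<alpha> \<beta> j z) \<le> (\<Sum>k. norm (tk q \<alpha> \<beta> k z * of_real q ^ (j*k)))"
    unfolding Ser_def by (rule summable_norm[OF Ser_summable[OF assms]])
  also have "\<dots> \<le> SB"
    unfolding SB_def
    by (rule suminf_le[OF _ Ser_summable[OF assms] Mk_summable'])
       (use term_bound[OF q0 q1 a1 a2 b1 assms] in auto)
  finally show ?thesis .
qed

lemma tk_holo: "(\<lambda>z. tk q \<alpha> \<beta> k z) holomorphic_on UNIV"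
proof -
  have "(\<lambda>z. Pq q (of_real q ^ (k+1) * z\<^sup>2)) holomorphic_on UNIV"
  proof -
    have h1: "(\<lambda>z. of_real q ^ (k+1) * z\<^sup>2) holomorphic_on UNIV" by (intro holomorphic_intros)
    have h2: "Pq q holomorphic_on ((\<lambda>z. of_real q ^ (k+1) * z\<^sup>2) ` UNIV)"
      using Pq_holo[OF q0 q1] by (rule holomorphic_on_subset) auto
    show ?thesis using holomorphic_on_compose[OF h1 h2] by (simp add: o_def)
  qed
  then show ?thesis
    unfolding tk_def cfun_def by (intro holomorphic_intros) auto
qed

lemma Ser_holo: "Ser q \<alpha> \<beta> j holomorphic_on ball 0 1"
proof (rule holomorphic_uniform_sequence[where f="\<lambda>N z. \<Sum>k<N. tk q \<alpha> \<beta> k z * of_real q ^ (j*k)"])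
  fix N show "(\<lambda>z. \<Sum>k<N. tk q \<alpha> \<beta> k z * of_real q ^ (j*k)) holomorphic_on ball 0 1"
    using tk_holo by (intro holomorphic_intros) (auto intro: holomorphic_on_subset)
next
  have ul: "uniform_limit (cball 0 1) (\<lambda>N z. \<Sum>k<N. tk q \<alpha> \<beta> k z * of_real q ^ (j*k)) (\<lambda>z. \<Sum>k. tk q \<alpha> \<beta> k z * of_real q ^ (j*k)) sequentially"
    by (rule Weierstrass_m_test[OF _ Mk_summable']) (use term_bound[OF q0 q1 a1 a2 b1] in auto)
  have eq: "(\<lambda>z. \<Sum>k. tk q \<alpha> \<beta> k z * of_real q ^ (j*k)) = Ser q \<alpha> \<beta> j"
    by (simp add: Ser_def fun_eq_iff)
  fix z :: complex assume z: "z \<in> ball 0 1"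
  define d where "d = (1 - norm z) / 2"
  have d: "d > 0" using z unfolding d_def by auto
  have sub: "cball z d \<subseteq> ball 0 1"
  proof
    fix y assume "y \<in> cball z d"
    then have "norm (y - z) \<le> d" by (simp add: dist_norm norm_minus_commute)
    then have "norm y < 1" using norm_triangle_ineq2[of y z] z unfolding d_def by simp
    then show "y \<in> ball 0 1" by simp
  qed
  have "uniform_limit (cball z d) (\<lambda>N z. \<Sum>k<N. tk q \<alpha> \<beta> k z * of_real q ^ (j*k)) (Ser q \<alpha> \<beta> j) sequentially"
    using uniform_limit_on_subset[OF ul] sub unfolding eq by (meson ball_subset_cball order_trans)
  then show "\<exists>d>0. cball z d \<subseteq> ball 0 1 \<and> uniform_limit (cball z d) (\<lambda>N z. \<Sum>k<N. tk q \<alpha> \<beta> k z * of_real q ^ (j*k)) (Ser q \<alpha> \<beta> j) sequentially"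
    using d sub by blast
qed auto

end


definition Hf :: "real \<Rightarrow> real \<Rightarrow> real \<Rightarrow> nat \<Rightarrow> complex \<Rightarrow> complex" where
  "Hf q \<alpha> \<beta> j z = z ^ j * Ser q \<alpha> \<beta> j z"

context
  fixes q \<alpha> \<beta> :: real
  assumes q0: "0 < q" and q1: "q < 1" and a1: "-1 < \<alpha>" and a2: "\<alpha> < 1" and b1: "\<beta> < 1"
begin

lemma tk0: "tk q \<alpha> \<beta> 0 z = Pq q (of_real q * z\<^sup>2)"
  by (simp add: tk_def qpoch_def cfun_def)

lemma tk0_nonzero: assumes "norm z \<le> 1" shows "tk q \<alpha> \<beta> 0 z \<noteq> 0"
proof -
  have "norm (of_real q * z\<^sup>2) = q * norm z ^ 2" using q0 by (simp add: norm_mult norm_power)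
  also have "\<dots> \<le> q * 1" using assms q0 by (intro mult_left_mono power_le_one) auto
  also have "\<dots> < 1" using q1 by simp
  finally show ?thesis unfolding tk0 by (rule Pq_nonzero[OF q0 q1])
qed

lemma Ser_lim:
  assumes "norm z \<le> 1"
  shows "(\<lambda>j. Ser q \<alpha> \<beta> j z) \<longlonglongrightarrow> tk q \<alpha> \<beta> 0 z"
proof -
  define b where "b = (\<lambda>k::nat. if k = 0 then tk q \<alpha> \<beta> 0 z else 0)"
  have lim: "(\<lambda>n. tk q \<alpha> \<beta> k z * of_real q ^ (n*k)) \<longlonglongrightarrow> b k" for k
  proof (cases "k = 0")
    case True then show ?thesis by (simp add: b_def)
  next
    case False
    have "(\<lambda>n. (q ^ k) ^ n) \<longlonglongrightarrow> 0"
      using q0 q1 False by (intro LIMSEQ_power_zero) (auto simp: power_less_one_iff)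
    then have "(\<lambda>n. of_real ((q ^ k) ^ n) :: complex) \<longlonglongrightarrow> 0"
      using tendsto_of_real by fastforce
    then have "(\<lambda>n. tk q \<alpha> \<beta> k z * of_real ((q ^ k) ^ n)) \<longlonglongrightarrow> tk q \<alpha> \<beta> k z * 0"
      by (intro tendsto_mult tendsto_const)
    then show ?thesis using False
      by (simp add: b_def power_mult[symmetric] mult.commute[of _ k])
  qed
  have T: "eventually (\<lambda>n. summable (\<lambda>k. norm (tk q \<alpha> \<beta> k z * of_real q ^ (n*k)))) sequentially \<and>
           summable (\<lambda>n. norm (b n)) \<and>
           ((\<lambda>n. suminf (\<lambda>k. tk q \<alpha> \<beta> k z * of_real q ^ (n*k))) \<longlongrightarrow> suminf b) sequentially"
    by (rule tannerys_theorem[OF lim _ Mk_summable'[OF q0 q1 a1 a2 b1]])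
       (use term_bound[OF q0 q1 a1 a2 b1 assms] in \<open>auto intro!: always_eventually\<close>)
  have "suminf b = tk q \<alpha> \<beta> 0 z"
    unfolding b_def using sums_single[of 0 "\<lambda>_. tk q \<alpha> \<beta> 0 z"] by (simp add: sums_iff)
  then show ?thesis using T unfolding Ser_def by simp
qed

lemma cfun_cnj: "cfun q \<alpha> \<beta> k (cnj z) = cnj (cfun q \<alpha> \<beta> k z)"
  by (simp add: cfun_def)

lemma tk_cnj: "tk q \<alpha> \<beta> k (cnj z) = cnj (tk q \<alpha> \<beta> k z)"
proof -
  have "Pq q (of_real q ^ (k+1) * (cnj z)\<^sup>2) = cnj (Pq q (of_real q ^ (k+1) * z\<^sup>2))"
    using Pq_cnj[OF q0 q1, of "of_real q ^ (k+1) * z\<^sup>2"] by simp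
  moreover have "cnj (qpoch (of_real q) (of_real q) k) = qpoch (of_real q) (of_real q) k"
    by (simp add: qpoch_def)
  ultimately show ?thesis by (simp add: tk_def cfun_cnj)
qed

lemma Ser_cnj:
  assumes "norm z \<le> 1"
  shows "Ser q \<alpha> \<beta> j (cnj z) = cnj (Ser q \<alpha> \<beta> j z)"
proof -
  have "(\<lambda>k. tk q \<alpha> \<beta> k z * of_real q ^ (j*k)) sums Ser q \<alpha> \<beta> j z"
    by (rule Ser_sums[OF q0 q1 a1 a2 b1 assms])
  then have "(\<lambda>k. cnj (tk q \<alpha> \<beta> k z * of_real q ^ (j*k))) sums cnj (Ser q \<alpha> \<beta> j z)"
    by (subst sums_cnj)
  then have "(\<lambda>k. tk q \<alpha> \<beta> k (cnj z) * of_real q ^ (j*k)) sums cnj (Ser q \<alpha> \<beta> j z)"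
    by (simp add: tk_cnj)
  moreover have "(\<lambda>k. tk q \<alpha> \<beta> k (cnj z) * of_real q ^ (j*k)) sums Ser q \<alpha> \<beta> j (cnj z)"
    by (rule Ser_sums[OF q0 q1 a1 a2 b1]) (use assms in simp)
  ultimately show ?thesis using sums_unique2 by blast
qed

lemma tk_Suc:
  "tk q \<alpha> \<beta> (Suc k) z * (1 - of_real q ^ (k+1)) * (1 - of_real q ^ (k+1) * z\<^sup>2)
   = tk q \<alpha> \<beta> k z * (of_real \<alpha> * (1 + z\<^sup>2 * of_real q ^ (2*k)) - of_real \<beta> * of_real q ^ k * (1 + z\<^sup>2))"
proof -
  define Q :: complex where "Q = of_real q"
  have qk: "1 - Q * Q ^ j \<noteq> 0" for j
  proof -
    have "1 - Q * Q ^ j = of_real (1 - q * q ^ j)" unfolding Q_def by simp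
    then show ?thesis using one_minus_pos[OF q0 q1 a1 a2 b1, of j] by (metis of_real_eq_0_iff less_irrefl)
  qed
  have qp: "qpoch Q Q k \<noteq> 0" unfolding qpoch_def using qk by (simp add: prod_zero_iff)
  have qpS: "qpoch Q Q (Suc k) = qpoch Q Q k * (1 - Q * Q ^ k)"
    unfolding qpoch_def by simp
  have cS: "cfun q \<alpha> \<beta> (Suc k) z = cfun q \<alpha> \<beta> k z * (of_real \<alpha> * (1 + z\<^sup>2 * Q ^ (2*k)) - of_real \<beta> * Q ^ k * (1 + z\<^sup>2))"
    unfolding cfun_def Q_def by simp
  have PS: "Pq q (Q ^ (k+1) * z\<^sup>2) = (1 - Q ^ (k+1) * z\<^sup>2) * Pq q (Q ^ (Suc k + 1) * z\<^sup>2)"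
    using Pq_rec[OF q0 q1, of "Q ^ (k+1) * z\<^sup>2"] unfolding Q_def by (simp add: mult_ac)
  show ?thesis
    unfolding tk_def Q_def[symmetric] qpS cS PS using qp qk[of k]
    by (simp add: field_simps)
qed

end


context
  fixes q \<alpha> \<beta> :: real
  assumes q0: "0 < q" and q1: "q < 1" and a1: "-1 < \<alpha>" and a2: "\<alpha> < 1" and b1: "\<beta> < 1"
begin

lemma Ser_rec:
  assumes z: "norm z \<le> 1"
  shows "(1 - of_real \<alpha> * of_real q ^ j) * Ser q \<alpha> \<beta> j z
       - (1 + z\<^sup>2) * (1 - of_real \<beta> * of_real q ^ j) * Ser q \<alpha> \<beta> (j+1) z
       + z\<^sup>2 * (1 - of_real \<alpha> * of_real q ^ j) * Ser q \<alpha> \<beta> (j+2) z = 0"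
proof -
  define Q :: complex where "Q = of_real q"
  define w where "w = z\<^sup>2"
  define f where "f = (\<lambda>k. tk q \<alpha> \<beta> k z * Q ^ (j*k))"
  define e where "e = (\<lambda>k. of_real \<alpha> * (1 + w * Q ^ (2*k)) - of_real \<beta> * Q ^ k * (1 + w))"
  have S0: "f sums Ser q \<alpha> \<beta> j z"
    unfolding f_def Q_def by (rule Ser_sums[OF q0 q1 a1 a2 b1 z])
  have S1: "(\<lambda>k. f k * Q ^ k) sums Ser q \<alpha> \<beta> (j+1) z"
    using Ser_sums[OF q0 q1 a1 a2 b1 z, of "j+1"]
    unfolding f_def Q_def by (simp add: power_add algebra_simps)
  have S2: "(\<lambda>k. f k * Q ^ k * Q ^ k) sums Ser q \<alpha> \<beta> (j+2) z"
    using Ser_sums[OF q0 q1 a1 a2 b1 z, of "j+2"]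
    unfolding f_def Q_def by (simp add: power_add power_mult_distrib power_mult algebra_simps)
  define g where "g = (\<lambda>k. f k * (1 - Q ^ k) * (1 - w * Q ^ k))"
  have g_eq: "g = (\<lambda>k. f k - (1 + w) * (f k * Q ^ k) + w * (f k * Q ^ k * Q ^ k))"
    unfolding g_def by (simp add: fun_eq_iff algebra_simps)
  have gs: "g sums (Ser q \<alpha> \<beta> j z - (1 + w) * Ser q \<alpha> \<beta> (j+1) z + w * Ser q \<alpha> \<beta> (j+2) z)"
    unfolding g_eq by (intro sums_add sums_diff sums_mult S0 S1 S2)
  have e_eq: "(\<lambda>k. f k * e k) = (\<lambda>k. of_real \<alpha> * f k + (of_real \<alpha> * w) * (f k * Q ^ k * Q ^ k) - (of_real \<beta> * (1 + w)) * (f k * Q ^ k))"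
    unfolding e_def by (simp add: fun_eq_iff algebra_simps power_mult mult_2 power_add power2_eq_square)
  have hs: "(\<lambda>k. f k * e k) sums (of_real \<alpha> * Ser q \<alpha> \<beta> j z + (of_real \<alpha> * w) * Ser q \<alpha> \<beta> (j+2) z - (of_real \<beta> * (1 + w)) * Ser q \<alpha> \<beta> (j+1) z)"
    unfolding e_eq by (intro sums_add sums_diff sums_mult S0 S1 S2)
  have gSuc: "g (Suc k) = Q ^ j * (f k * e k)" for k
  proof -
    have "g (Suc k) = Q ^ j * Q ^ (j*k) * (tk q \<alpha> \<beta> (Suc k) z * (1 - Q ^ (k+1)) * (1 - Q ^ (k+1) * z\<^sup>2))"
      unfolding g_def f_def w_def by (simp add: power_add algebra_simps)
    also have "\<dots> = Q ^ j * Q ^ (j*k) * (tk q \<alpha> \<beta> k z * e k)"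
      using tk_Suc[OF q0 q1 a1 a2 b1, of k z] unfolding e_def Q_def w_def by simp
    finally show ?thesis unfolding f_def by (simp add: algebra_simps)
  qed
  have "(\<lambda>k. g (Suc k)) sums (Q ^ j * (of_real \<alpha> * Ser q \<alpha> \<beta> j z + (of_real \<alpha> * w) * Ser q \<alpha> \<beta> (j+2) z - (of_real \<beta> * (1 + w)) * Ser q \<alpha> \<beta> (j+1) z))"
    unfolding gSuc by (intro sums_mult hs)
  moreover have "g 0 = 0" unfolding g_def by simp
  ultimately have "g sums (Q ^ j * (of_real \<alpha> * Ser q \<alpha> \<beta> j z + (of_real \<alpha> * w) * Ser q \<alpha> \<beta> (j+2) z - (of_real \<beta> * (1 + w)) * Ser q \<alpha> \<beta> (j+1) z))"
    by (simp add: sums_Suc_iff)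
  with gs have "Ser q \<alpha> \<beta> j z - (1 + w) * Ser q \<alpha> \<beta> (j+1) z + w * Ser q \<alpha> \<beta> (j+2) z
      = Q ^ j * (of_real \<alpha> * Ser q \<alpha> \<beta> j z + (of_real \<alpha> * w) * Ser q \<alpha> \<beta> (j+2) z - (of_real \<beta> * (1 + w)) * Ser q \<alpha> \<beta> (j+1) z)"
    using sums_unique2 by blast
  then show ?thesis unfolding Q_def w_def by (simp add: algebra_simps)
qed

lemma H_rec:
  assumes z: "norm z \<le> 1"
  shows "z * (1 - of_real \<alpha> * of_real q ^ j) * (Hf q \<alpha> \<beta> j z + Hf q \<alpha> \<beta> (j+2) z)
       = (1 + z\<^sup>2) * (1 - of_real \<beta> * of_real q ^ j) * Hf q \<alpha> \<beta> (j+1) z"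
proof -
  have "z ^ (j+1) * ((1 - of_real \<alpha> * of_real q ^ j) * Ser q \<alpha> \<beta> j z
       - (1 + z\<^sup>2) * (1 - of_real \<beta> * of_real q ^ j) * Ser q \<alpha> \<beta> (j+1) z
       + z\<^sup>2 * (1 - of_real \<alpha> * of_real q ^ j) * Ser q \<alpha> \<beta> (j+2) z) = 0"
    using Ser_rec[OF z] by simp
  then show ?thesis
    unfolding Hf_def by (simp add: algebra_simps power2_eq_square)
qed

end


definition wq :: "real \<Rightarrow> real \<Rightarrow> real \<Rightarrow> nat \<Rightarrow> real" where
  "wq q \<alpha> \<beta> j = (1 - \<beta> * q ^ j) / (1 - \<alpha> * q ^ j)"

context
  fixes q \<alpha> \<beta> :: real
  assumes q0: "0 < q" and q1: "q < 1" and a1: "-1 < \<alpha>" and a2: "\<alpha> < 1" and b1: "\<beta> < 1"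
begin

lemma aq_pos: "0 < 1 - \<alpha> * q ^ j"
proof -
  have "\<bar>\<alpha> * q ^ j\<bar> \<le> \<bar>\<alpha>\<bar>" using q0 q1 by (simp add: abs_mult power_le_one mult_left_le)
  then show ?thesis using a1 a2 by linarith
qed

lemma bq_pos: "0 < 1 - \<beta> * q ^ j"
proof (cases "\<beta> \<le> 0")
  case True
  have "\<beta> * q ^ j \<le> 0" using True q0 by (simp add: mult_nonpos_nonneg)
  then show ?thesis by linarith
next
  case False
  then have "\<beta> * q ^ j \<le> \<beta>" using q0 q1 by (simp add: power_le_one mult_left_le)
  then show ?thesis using b1 by linarith
qed

lemma wq_pos: "0 < wq q \<alpha> \<beta> j"
  unfolding wq_def using aq_pos bq_pos by simp

lemma H_rec':
  assumes z: "norm z \<le> 1" "z \<noteq> 0"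
  shows "Hf q \<alpha> \<beta> (j+2) z = (1 + z\<^sup>2) / z * of_real (wq q \<alpha> \<beta> j) * Hf q \<alpha> \<beta> (j+1) z - Hf q \<alpha> \<beta> j z"
proof -
  have c: "(1 - of_real \<alpha> * of_real q ^ j :: complex) = of_real (1 - \<alpha> * q ^ j)" by simp
  have d: "(1 - of_real \<beta> * of_real q ^ j :: complex) = of_real (1 - \<beta> * q ^ j)" by simp
  have nz: "(of_real (1 - \<alpha> * q ^ j) :: complex) \<noteq> 0" using aq_pos[of j] by (metis of_real_eq_0_iff less_irrefl)
  have "z * of_real (1 - \<alpha> * q ^ j) * (Hf q \<alpha> \<beta> j z + Hf q \<alpha> \<beta> (j+2) z)
       = (1 + z\<^sup>2) * of_real (1 - \<beta> * q ^ j) * Hf q \<alpha> \<beta> (j+1) z"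
    using H_rec[OF q0 q1 a1 a2 b1 z(1), of j] unfolding c d .
  then have "(Hf q \<alpha> \<beta> j z + Hf q \<alpha> \<beta> (j+2) z) * (z * of_real (1 - \<alpha> * q ^ j)) = (1 + z\<^sup>2) * of_real (1 - \<beta> * q ^ j) * Hf q \<alpha> \<beta> (j+1) z"
    by (simp add: ac_simps)
  then have "Hf q \<alpha> \<beta> j z + Hf q \<alpha> \<beta> (j+2) z = (1 + z\<^sup>2) * of_real (1 - \<beta> * q ^ j) * Hf q \<alpha> \<beta> (j+1) z / (z * of_real (1 - \<alpha> * q ^ j))"
    using nz z(2) by (simp add: eq_divide_eq)
  moreover have "(1 + z\<^sup>2) / z * of_real (wq q \<alpha> \<beta> j) * Hf q \<alpha> \<beta> (j+1) z = (1 + z\<^sup>2) * of_real (1 - \<beta> * q ^ j) * Hf q \<alpha> \<beta> (j+1) z / (z * of_real (1 - \<alpha> * q ^ j))"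
    unfolding wq_def of_real_divide by simp
  ultimately show ?thesis by (simp add: algebra_simps)
qed

lemma H_holo: "Hf q \<alpha> \<beta> j holomorphic_on ball 0 1"
proof -
  have "(\<lambda>z. z ^ j * Ser q \<alpha> \<beta> j z) holomorphic_on ball 0 1"
    using Ser_holo[OF q0 q1 a1 a2 b1] by (intro holomorphic_intros)
  then show ?thesis unfolding Hf_def[abs_def] .
qed

lemma H_bound:
  assumes "norm z \<le> 1"
  shows "norm (Hf q \<alpha> \<beta> j z) \<le> norm z ^ j * SB q \<alpha> \<beta>"
  unfolding Hf_def norm_mult norm_power
  using Ser_bound[OF q0 q1 a1 a2 b1 assms] by (intro mult_left_mono) auto

lemma H_lim:
  assumes "norm z < 1"
  shows "(\<lambda>j. Hf q \<alpha> \<beta> j z) \<longlonglongrightarrow> 0"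
proof -
  have "(\<lambda>j. norm z ^ j * SB q \<alpha> \<beta>) \<longlonglongrightarrow> 0 * SB q \<alpha> \<beta>"
    using assms by (intro tendsto_mult tendsto_const LIMSEQ_power_zero) auto
  then have g0: "(\<lambda>j. norm z ^ j * SB q \<alpha> \<beta>) \<longlonglongrightarrow> 0" by simp
  have ev: "eventually (\<lambda>j. norm (Hf q \<alpha> \<beta> j z) \<le> norm z ^ j * SB q \<alpha> \<beta>) sequentially"
    using assms by (intro always_eventually allI H_bound) simp
  show ?thesis by (rule Lim_null_comparison[OF ev g0])
qed

lemma H_cnj:
  assumes "norm z \<le> 1"
  shows "Hf q \<alpha> \<beta> j (cnj z) = cnj (Hf q \<alpha> \<beta> j z)"
  unfolding Hf_def using Ser_cnj[OF q0 q1 a1 a2 b1 assms] by simp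

lemma H_real:
  assumes "\<bar>x\<bar> \<le> 1"
  shows "Hf q \<alpha> \<beta> j (of_real x) \<in> \<real>"
proof -
  have "cnj (Hf q \<alpha> \<beta> j (of_real x)) = Hf q \<alpha> \<beta> j (of_real x)"
    using H_cnj[of "of_real x" j] assms by simp
  then show ?thesis using Reals_cnj_iff by blast
qed

lemma H_not_both_zero:
  assumes "norm z \<le> 1" "z \<noteq> 0" "Hf q \<alpha> \<beta> j z = 0" "Hf q \<alpha> \<beta> (j+1) z = 0"
  shows False
proof -
  have all: "Hf q \<alpha> \<beta> (j+m) z = 0 \<and> Hf q \<alpha> \<beta> (j+m+1) z = 0" for m
  proof (induction m)
    case 0 then show ?case using assms by simp
  next
    case (Suc m)
    have "Hf q \<alpha> \<beta> ((j+m)+2) z = 0"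
      using H_rec'[OF assms(1,2), of "j+m"] Suc by simp
    then show ?case using Suc by (simp add: add_ac)
  qed
  have "Ser q \<alpha> \<beta> (m + j) z = 0" for m
    using all[of m] assms(2) unfolding Hf_def by (simp add: add_ac)
  moreover have "(\<lambda>m. Ser q \<alpha> \<beta> (m + j) z) \<longlonglongrightarrow> tk q \<alpha> \<beta> 0 z"
    using Ser_lim[OF q0 q1 a1 a2 b1 assms(1)] by (rule LIMSEQ_ignore_initial_segment)
  ultimately have "tk q \<alpha> \<beta> 0 z = 0"
    using LIMSEQ_unique[OF _ tendsto_const] by simp
  then show False using tk0_nonzero[OF q0 q1 a1 a2 b1 assms(1)] by simp
qed

lemma Hderiv_lim:
  assumes "norm z < 1"
  shows "(\<lambda>N. deriv (Hf q \<alpha> \<beta> N) z) \<longlonglongrightarrow> 0"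
proof -
  define r where "r = (1 + norm z) / 2"
  define d where "d = r - norm z"
  have d: "d > 0" and r1: "r < 1" and r0: "0 \<le> r" using assms unfolding d_def r_def by auto
  have sub: "cball z d \<subseteq> ball 0 1"
  proof
    fix y assume "y \<in> cball z d"
    then have "norm (y - z) \<le> d" by (simp add: dist_norm norm_minus_commute)
    then have "norm y \<le> r" using norm_triangle_ineq2[of y z] unfolding d_def by simp
    then show "y \<in> ball 0 1" using r1 by simp
  qed
  have bnd: "norm (deriv (Hf q \<alpha> \<beta> N) z) \<le> r ^ N * SB q \<alpha> \<beta> / d" for N
  proof -
    have "norm ((deriv ^^ 1) (Hf q \<alpha> \<beta> N) z) \<le> fact 1 * (r ^ N * SB q \<alpha> \<beta>) / d ^ 1"
    proof (rule Cauchy_inequality)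
      show "Hf q \<alpha> \<beta> N holomorphic_on ball z d"
        using H_holo sub ball_subset_cball holomorphic_on_subset by blast
      show "continuous_on (cball z d) (Hf q \<alpha> \<beta> N)"
        using H_holo sub holomorphic_on_imp_continuous_on holomorphic_on_subset by blast
      show "0 < d" by (rule d)
      fix x assume x: "norm (z - x) = d"
      then have nx: "norm x \<le> r" using norm_triangle_ineq2[of x z] unfolding d_def
        by (simp add: norm_minus_commute)
      have "norm (Hf q \<alpha> \<beta> N x) \<le> norm x ^ N * SB q \<alpha> \<beta>"
        using H_bound[of x N] nx r1 by simp
      also have "\<dots> \<le> r ^ N * SB q \<alpha> \<beta>"
        using nx SB_nonneg[OF q0 q1 a1 a2 b1] by (intro mult_right_mono power_mono) auto
      finally show "norm (Hf q \<alpha> \<beta> N x) \<le> r ^ N * SB q \<alpha> \<beta>" .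
    qed
    then show ?thesis by simp
  qed
  have "(\<lambda>N. r ^ N * SB q \<alpha> \<beta> / d) \<longlonglongrightarrow> 0 * SB q \<alpha> \<beta> / d"
    using r0 r1 d by (intro tendsto_divide tendsto_mult tendsto_const LIMSEQ_power_zero) auto
  then have g0: "(\<lambda>N. r ^ N * SB q \<alpha> \<beta> / d) \<longlonglongrightarrow> 0" by simp
  have ev: "eventually (\<lambda>N. norm (deriv (Hf q \<alpha> \<beta> N) z) \<le> r ^ N * SB q \<alpha> \<beta> / d) sequentially"
    by (intro always_eventually allI bnd)
  show ?thesis by (rule Lim_null_comparison[OF ev g0])
qed

end


lemma tele_W:
  fixes a b w :: "nat \<Rightarrow> complex" and la mu :: complex
  assumes ra: "\<And>j. a (Suc (Suc j)) = la * w j * a (Suc j) - a j"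
      and rb: "\<And>j. b (Suc (Suc j)) = mu * w j * b (Suc j) - b j"
  shows "a (k+m) * b (Suc (k+m)) - a (Suc (k+m)) * b (k+m)
       = a k * b (Suc k) - a (Suc k) * b k + (mu - la) * (\<Sum>i<m. w (k+i) * a (Suc (k+i)) * b (Suc (k+i)))"
proof (induction m)
  case 0 show ?case by simp
next
  case (Suc m)
  have step: "a (Suc (k+m)) * b (Suc (Suc (k+m))) - a (Suc (Suc (k+m))) * b (Suc (k+m))
      = (a (k+m) * b (Suc (k+m)) - a (Suc (k+m)) * b (k+m)) + (mu - la) * (w (k+m) * a (Suc (k+m)) * b (Suc (k+m)))"
    unfolding ra rb by (simp add: algebra_simps)
  have "a (k + Suc m) * b (Suc (k + Suc m)) - a (Suc (k + Suc m)) * b (k + Suc m)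
      = (a (k+m) * b (Suc (k+m)) - a (Suc (k+m)) * b (k+m)) + (mu - la) * (w (k+m) * a (Suc (k+m)) * b (Suc (k+m)))"
    using step by simp
  also have "\<dots> = a k * b (Suc k) - a (Suc k) * b k + (mu - la) * (\<Sum>i<m. w (k+i) * a (Suc (k+i)) * b (Suc (k+i)))
      + (mu - la) * (w (k+m) * a (Suc (k+m)) * b (Suc (k+m)))"
    by (simp only: Suc.IH)
  also have "\<dots> = a k * b (Suc k) - a (Suc k) * b k + (mu - la) * (\<Sum>i<Suc m. w (k+i) * a (Suc (k+i)) * b (Suc (k+i)))"
    by (simp add: algebra_simps)
  finally show ?case .
qed

lemma tele_D:
  fixes a d w :: "nat \<Rightarrow> complex" and la dl :: complex
  assumes ra: "\<And>j. a (Suc (Suc j)) = la * w j * a (Suc j) - a j"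
      and rd: "\<And>j. d (Suc (Suc j)) = dl * w j * a (Suc j) + la * w j * d (Suc j) - d j"
  shows "a (k+m) * d (Suc (k+m)) - a (Suc (k+m)) * d (k+m)
       = a k * d (Suc k) - a (Suc k) * d k + dl * (\<Sum>i<m. w (k+i) * a (Suc (k+i)) ^ 2)"
proof (induction m)
  case 0 show ?case by simp
next
  case (Suc m)
  have step: "a (Suc (k+m)) * d (Suc (Suc (k+m))) - a (Suc (Suc (k+m))) * d (Suc (k+m))
      = (a (k+m) * d (Suc (k+m)) - a (Suc (k+m)) * d (k+m)) + dl * (w (k+m) * a (Suc (k+m)) ^ 2)"
    unfolding ra rd by (simp add: algebra_simps power2_eq_square)
  have "a (k + Suc m) * d (Suc (k + Suc m)) - a (Suc (k + Suc m)) * d (k + Suc m)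
      = (a (k+m) * d (Suc (k+m)) - a (Suc (k+m)) * d (k+m)) + dl * (w (k+m) * a (Suc (k+m)) ^ 2)"
    using step by simp
  also have "\<dots> = a k * d (Suc k) - a (Suc k) * d k + dl * (\<Sum>i<m. w (k+i) * a (Suc (k+i)) ^ 2)
      + dl * (w (k+m) * a (Suc (k+m)) ^ 2)"
    by (simp only: Suc.IH)
  also have "\<dots> = a k * d (Suc k) - a (Suc k) * d k + dl * (\<Sum>i<Suc m. w (k+i) * a (Suc (k+i)) ^ 2)"
    by (simp add: algebra_simps)
  finally show ?case .
qed

lemma lam_eq: "(z::complex) \<noteq> 0 \<Longrightarrow> (1 + z\<^sup>2) / z = z + inverse z"
  by (simp add: field_simps power2_eq_square)

context
  fixes q \<alpha> \<beta> :: real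
  assumes q0: "0 < q" and q1: "q < 1" and a1: "-1 < \<alpha>" and a2: "\<alpha> < 1" and b1: "\<beta> < 1"
begin

lemma H_rec2:
  assumes "norm z \<le> 1" "z \<noteq> 0"
  shows "Hf q \<alpha> \<beta> (Suc (Suc j)) z = (z + inverse z) * of_real (wq q \<alpha> \<beta> j) * Hf q \<alpha> \<beta> (Suc j) z - Hf q \<alpha> \<beta> j z"
  using H_rec'[OF q0 q1 a1 a2 b1 assms, of j] lam_eq[OF assms(2)] by simp

lemma H_zero_real:
  assumes z: "norm z < 1" "z \<noteq> 0" and h: "Hf q \<alpha> \<beta> k z = 0"
  shows "Im z = 0"
proof -
  define a where "a = (\<lambda>j. Hf q \<alpha> \<beta> j z)"
  define b where "b = (\<lambda>j. Hf q \<alpha> \<beta> j (cnj z))"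
  define w where "w = (\<lambda>j. of_real (wq q \<alpha> \<beta> j) :: complex)"
  define la where "la = z + inverse z"
  define mu where "mu = cnj z + inverse (cnj z)"
  have bcnj: "b j = cnj (a j)" for j
    unfolding a_def b_def using H_cnj[OF q0 q1 a1 a2 b1, of z j] z by simp
  have ra: "a (Suc (Suc j)) = la * w j * a (Suc j) - a j" for j
    unfolding a_def la_def w_def using H_rec2[of z j] z by simp
  have rb: "b (Suc (Suc j)) = mu * w j * b (Suc j) - b j" for j
    unfolding b_def mu_def w_def using H_rec2[of "cnj z" j] z by simp
  define S where "S = (\<lambda>m. \<Sum>i<m. wq q \<alpha> \<beta> (k+i) * norm (a (Suc (k+i))) ^ 2)"
  have sumS: "(\<Sum>i<m. w (k+i) * a (Suc (k+i)) * b (Suc (k+i))) = of_real (S m)" for m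
  proof -
    have cn: "a j * cnj (a j) = of_real (norm (a j) ^ 2)" for j using complex_norm_square by metis
    show ?thesis unfolding S_def w_def bcnj by (simp add: mult.assoc cn)
  qed
  have ak: "a k = 0" "b k = 0" using h unfolding a_def using bcnj[of k] unfolding a_def by auto
  have W: "a (k+m) * b (Suc (k+m)) - a (Suc (k+m)) * b (k+m) = (mu - la) * of_real (S m)" for m
    using tele_W[where a=a and b=b and w=w and la=la and mu=mu and k=k and m=m, OF ra rb] ak sumS by simp
  have alim: "(\<lambda>m. a (k+m)) \<longlonglongrightarrow> 0"
    using LIMSEQ_ignore_initial_segment[OF H_lim[OF q0 q1 a1 a2 b1 z(1)], of k] unfolding a_def by (simp add: add.commute)
  have alim1: "(\<lambda>m. a (Suc (k+m))) \<longlonglongrightarrow> 0"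
    using LIMSEQ_ignore_initial_segment[OF H_lim[OF q0 q1 a1 a2 b1 z(1)], of "Suc k"] unfolding a_def by (simp add: add.commute)
  have "(\<lambda>m. a (k+m) * b (Suc (k+m)) - a (Suc (k+m)) * b (k+m)) \<longlonglongrightarrow> 0 * cnj 0 - 0 * cnj 0"
    unfolding bcnj by (intro tendsto_intros alim alim1)
  then have Wlim: "(\<lambda>m. (mu - la) * of_real (S m)) \<longlonglongrightarrow> 0" unfolding W by simp
  have wpos: "0 < wq q \<alpha> \<beta> j" for j by (rule wq_pos[OF q0 q1 a1 a2 b1])
  have a1nz: "a (Suc k) \<noteq> 0"
  proof
    assume "a (Suc k) = 0"
    then show False using H_not_both_zero[OF q0 q1 a1 a2 b1, of z k] ak z unfolding a_def by simp
  qed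
  have Spos: "S 1 \<le> S m" if "m \<ge> 1" for m
    unfolding S_def using that wpos
    by (intro sum_mono2) (auto intro!: mult_nonneg_nonneg simp: less_imp_le)
  have S1: "0 < S 1" unfolding S_def using wpos[of k] a1nz by simp
  have "mu = la"
  proof (rule ccontr)
    assume ne: "mu \<noteq> la"
    have "(\<lambda>m. inverse (mu - la) * ((mu - la) * of_real (S m))) \<longlonglongrightarrow> inverse (mu - la) * 0"
      by (intro tendsto_intros Wlim)
    then have "(\<lambda>m. of_real (S m) :: complex) \<longlonglongrightarrow> 0" using ne by simp
    then have "(\<lambda>m. Re (of_real (S m))) \<longlonglongrightarrow> Re 0" by (rule tendsto_Re)
    then have "S \<longlonglongrightarrow> 0" by simp
    then have "S 1 \<le> 0" by (rule LIMSEQ_le_const) (use Spos in auto)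
    then show False using S1 by simp
  qed
  then have "cnj la = la" unfolding mu_def la_def by simp
  then have "Im la = 0" by (metis Reals_cnj_iff complex_is_Real_iff)
  then have e: "Im z - Im z / ((Re z)\<^sup>2 + (Im z)\<^sup>2) = 0" unfolding la_def by simp
  define s where "s = (Re z)\<^sup>2 + (Im z)\<^sup>2"
  have s1: "s < 1"
  proof -
    have "sqrt s < 1" using z(1) unfolding s_def by (simp add: cmod_def)
    then show ?thesis using real_sqrt_lt_1_iff by blast
  qed
  have s0: "0 < s" using z(2) unfolding s_def by (simp add: complex_eq_iff sum_power2_gt_zero_iff)
  have "Im z * (s - 1) = 0" using e s0 unfolding s_def[symmetric] by (simp add: field_simps)
  then show "Im z = 0" using s1 by simp
qed

end


context
  fixes q \<alpha> \<beta> :: real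
  assumes q0: "0 < q" and q1: "q < 1" and a1: "-1 < \<alpha>" and a2: "\<alpha> < 1" and b1: "\<beta> < 1"
begin

lemma H_deriv: "norm z < 1 \<Longrightarrow> (Hf q \<alpha> \<beta> j has_field_derivative deriv (Hf q \<alpha> \<beta> j) z) (at z)"
  using H_holo[OF q0 q1 a1 a2 b1] by (rule holomorphic_derivI) auto

lemma Hderiv_rec:
  assumes z: "norm z < 1" "z \<noteq> 0"
  shows "deriv (Hf q \<alpha> \<beta> (Suc (Suc j))) z =
           (1 - inverse z ^ 2) * of_real (wq q \<alpha> \<beta> j) * Hf q \<alpha> \<beta> (Suc j) z
         + (z + inverse z) * of_real (wq q \<alpha> \<beta> j) * deriv (Hf q \<alpha> \<beta> (Suc j)) z
         - deriv (Hf q \<alpha> \<beta> j) z"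
proof -
  define c where "c = (of_real (wq q \<alpha> \<beta> j) :: complex)"
  define F where "F = (\<lambda>u. (u + inverse u) * c * Hf q \<alpha> \<beta> (Suc j) u - Hf q \<alpha> \<beta> j u)"
  have l: "((\<lambda>u. u + inverse u) has_field_derivative (1 - inverse z ^ 2)) (at z)"
    using DERIV_add[OF DERIV_ident DERIV_inverse[OF z(2)], of UNIV] by (simp add: power2_eq_square)
  have "(F has_field_derivative
          ((1 - inverse z ^ 2) * c * Hf q \<alpha> \<beta> (Suc j) z + deriv (Hf q \<alpha> \<beta> (Suc j)) z * ((z + inverse z) * c)
           - deriv (Hf q \<alpha> \<beta> j) z)) (at z)"
    unfolding F_def
    by (intro DERIV_diff DERIV_mult DERIV_cmult_right l H_deriv z)
  then have dF: "(F has_field_derivative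
          ((1 - inverse z ^ 2) * c * Hf q \<alpha> \<beta> (Suc j) z + (z + inverse z) * c * deriv (Hf q \<alpha> \<beta> (Suc j)) z
           - deriv (Hf q \<alpha> \<beta> j) z)) (at z)"
    by (simp add: algebra_simps)
  have "(Hf q \<alpha> \<beta> (Suc (Suc j)) has_field_derivative
          ((1 - inverse z ^ 2) * c * Hf q \<alpha> \<beta> (Suc j) z + (z + inverse z) * c * deriv (Hf q \<alpha> \<beta> (Suc j)) z
           - deriv (Hf q \<alpha> \<beta> j) z)) (at z)"
  proof (rule has_field_derivative_transform_within_open[OF dF, of "ball 0 1 - {0}"])
    show "open (ball 0 1 - {0::complex})" by auto
    show "z \<in> ball 0 1 - {0}" using z by auto
    fix u :: complex assume "u \<in> ball 0 1 - {0}"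
    then show "F u = Hf q \<alpha> \<beta> (Suc (Suc j)) u"
      unfolding F_def c_def using H_rec2[OF q0 q1 a1 a2 b1, of u j] by simp
  qed
  then show ?thesis
    using DERIV_unique H_deriv[OF z(1), of "Suc (Suc j)"] unfolding c_def by blast
qed

lemma H_wronski:
  assumes x: "x \<noteq> 0" "\<bar>x\<bar> < 1"
  shows "0 < Re (Hf q \<alpha> \<beta> k (of_real x) * deriv (Hf q \<alpha> \<beta> (Suc k)) (of_real x)
              - Hf q \<alpha> \<beta> (Suc k) (of_real x) * deriv (Hf q \<alpha> \<beta> k) (of_real x))"
proof -
  define X where "X = (of_real x :: complex)"
  have X: "norm X < 1" "X \<noteq> 0" "norm X \<le> 1" using x unfolding X_def by auto
  define a where "a = (\<lambda>j. Hf q \<alpha> \<beta> j X)"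
  define d where "d = (\<lambda>j. deriv (Hf q \<alpha> \<beta> j) X)"
  define w where "w = (\<lambda>j. of_real (wq q \<alpha> \<beta> j) :: complex)"
  define la where "la = X + inverse X"
  define dl where "dl = 1 - inverse X ^ 2"
  have ra: "a (Suc (Suc j)) = la * w j * a (Suc j) - a j" for j
    unfolding a_def la_def w_def using H_rec2[OF q0 q1 a1 a2 b1 X(3) X(2), of j] by simp
  have rd: "d (Suc (Suc j)) = dl * w j * a (Suc j) + la * w j * d (Suc j) - d j" for j
    unfolding d_def a_def la_def w_def dl_def using Hderiv_rec[OF X(1) X(2), of j] by simp
  have areal: "a j = of_real (Re (a j))" for j
    using H_real[OF q0 q1 a1 a2 b1, of x j] x unfolding a_def X_def by (simp add: complex_is_Real_iff complex_eq_iff)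
  define S where "S = (\<lambda>m. \<Sum>i<m. wq q \<alpha> \<beta> (k+i) * Re (a (Suc (k+i))) ^ 2)"
  have sumS: "(\<Sum>i<m. w (k+i) * a (Suc (k+i)) ^ 2) = of_real (S m)" for m
    unfolding S_def w_def by (subst areal) simp
  define \<delta> where "\<delta> = 1 - 1 / x\<^sup>2"
  have dl_eq: "dl = of_real \<delta>" unfolding dl_def \<delta>_def X_def by (simp add: power_inverse divide_inverse)
  have \<delta>neg: "\<delta> < 0"
  proof -
    have "x\<^sup>2 < 1" using x by (simp add: abs_square_less_1)
    moreover have "0 < x\<^sup>2" using x by simp
    ultimately have "1 < 1 / x\<^sup>2" by (simp add: field_simps)
    then show ?thesis unfolding \<delta>_def by simp
  qed
  define D0 where "D0 = a k * d (Suc k) - a (Suc k) * d k"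
  have Dm: "a (k+m) * d (Suc (k+m)) - a (Suc (k+m)) * d (k+m) = D0 + of_real \<delta> * of_real (S m)" for m
    using tele_D[where a=a and d=d and w=w and la=la and dl=dl and k=k and m=m, OF ra rd] sumS dl_eq
    unfolding D0_def by simp
  have alim: "(\<lambda>m. a (k+m)) \<longlonglongrightarrow> 0"
    using LIMSEQ_ignore_initial_segment[OF H_lim[OF q0 q1 a1 a2 b1 X(1)], of k] unfolding a_def by (simp add: add.commute)
  have alim1: "(\<lambda>m. a (Suc (k+m))) \<longlonglongrightarrow> 0"
    using LIMSEQ_ignore_initial_segment[OF H_lim[OF q0 q1 a1 a2 b1 X(1)], of "Suc k"] unfolding a_def by (simp add: add.commute)
  have dlim: "(\<lambda>m. d (k+m)) \<longlonglongrightarrow> 0"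
    using LIMSEQ_ignore_initial_segment[OF Hderiv_lim[OF q0 q1 a1 a2 b1 X(1)], of k] unfolding d_def by (simp add: add.commute)
  have dlim1: "(\<lambda>m. d (Suc (k+m))) \<longlonglongrightarrow> 0"
    using LIMSEQ_ignore_initial_segment[OF Hderiv_lim[OF q0 q1 a1 a2 b1 X(1)], of "Suc k"] unfolding d_def by (simp add: add.commute)
  have "(\<lambda>m. a (k+m) * d (Suc (k+m)) - a (Suc (k+m)) * d (k+m)) \<longlonglongrightarrow> 0 * 0 - 0 * 0"
    by (intro tendsto_intros alim alim1 dlim dlim1)
  then have L: "(\<lambda>m. D0 + of_real \<delta> * of_real (S m)) \<longlonglongrightarrow> 0" unfolding Dm by simp
  have "(\<lambda>m. (D0 + of_real \<delta> * of_real (S m) - D0) / of_real \<delta>) \<longlonglongrightarrow> (0 - D0) / of_real \<delta>"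
    using \<delta>neg by (intro tendsto_intros L) auto
  then have "(\<lambda>m. of_real (S m) :: complex) \<longlonglongrightarrow> - D0 / of_real \<delta>"
    using \<delta>neg by simp
  then have "(\<lambda>m. Re (of_real (S m))) \<longlonglongrightarrow> Re (- D0 / of_real \<delta>)" by (rule tendsto_Re)
  then have Slim: "S \<longlonglongrightarrow> - Re D0 / \<delta>" by simp
  have wpos: "0 < wq q \<alpha> \<beta> j" for j by (rule wq_pos[OF q0 q1 a1 a2 b1])
  have Smono: "S 2 \<le> S m" if "m \<ge> 2" for m
    unfolding S_def using that wpos
    by (intro sum_mono2) (auto intro!: mult_nonneg_nonneg simp: less_imp_le)
  have S2: "0 < S 2"
  proof -
    have nb: "Re (a (Suc k)) \<noteq> 0 \<or> Re (a (Suc (Suc k))) \<noteq> 0"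
    proof (rule ccontr)
      assume "\<not> ?thesis"
      then have "a (Suc k) = 0" "a (Suc (Suc k)) = 0" using areal[of "Suc k"] areal[of "Suc (Suc k)"] by auto
      then show False using H_not_both_zero[OF q0 q1 a1 a2 b1 X(3) X(2), of "Suc k"] unfolding a_def by simp
    qed
    have "S 2 = wq q \<alpha> \<beta> k * Re (a (Suc k)) ^ 2 + wq q \<alpha> \<beta> (Suc k) * Re (a (Suc (Suc k))) ^ 2"
      unfolding S_def by (simp add: numeral_2_eq_2)
    moreover have "0 \<le> wq q \<alpha> \<beta> k * Re (a (Suc k)) ^ 2" "0 \<le> wq q \<alpha> \<beta> (Suc k) * Re (a (Suc (Suc k))) ^ 2"
      using wpos by (auto simp: less_imp_le)
    moreover have "0 < wq q \<alpha> \<beta> k * Re (a (Suc k)) ^ 2 \<or> 0 < wq q \<alpha> \<beta> (Suc k) * Re (a (Suc (Suc k))) ^ 2"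
      using nb wpos by auto
    ultimately show ?thesis by linarith
  qed
  have "S 2 \<le> - Re D0 / \<delta>" by (rule LIMSEQ_le_const[OF Slim]) (use Smono in auto)
  then have "0 < - Re D0 / \<delta>" using S2 by linarith
  then have "0 < Re D0" using \<delta>neg by (simp add: divide_less_0_iff zero_less_divide_iff)
  then show ?thesis unfolding D0_def a_def d_def X_def .
qed

end


lemma sturm_interlace:
  fixes f g f' g' :: "real \<Rightarrow> real" and a b :: real
  assumes ab: "a < b"
    and df: "\<And>t. a \<le> t \<Longrightarrow> t \<le> b \<Longrightarrow> (f has_real_derivative f' t) (at t)"
    and dg: "\<And>t. a \<le> t \<Longrightarrow> t \<le> b \<Longrightarrow> (g has_real_derivative g' t) (at t)"
    and W: "\<And>t. a \<le> t \<Longrightarrow> t \<le> b \<Longrightarrow> 0 < f t * g' t - g t * f' t"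
    and fa: "f a = 0" and fb: "f b = 0" and fne: "\<And>t. a < t \<Longrightarrow> t < b \<Longrightarrow> f t \<noteq> 0"
  shows "\<exists>!t. a < t \<and> t < b \<and> g t = 0"
proof -
  have ga: "g a \<noteq> 0" using W[of a] fa ab by auto
  have gb: "g b \<noteq> 0" using W[of b] fb ab by auto
  have ex: "\<exists>t. a < t \<and> t < b \<and> g t = 0"
  proof (rule ccontr)
    assume nex: "\<not> ?thesis"
    have gnz: "g t \<noteq> 0" if "a \<le> t" "t \<le> b" for t
    proof (cases "t = a \<or> t = b")
      case True then show ?thesis using ga gb by auto
    next
      case False then show ?thesis using nex that by force
    qed
    have "(\<lambda>t. f t / g t) a > (\<lambda>t. f t / g t) b"
    proof (rule DERIV_neg_imp_decreasing[OF ab])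
      fix t assume t: "a \<le> t" "t \<le> b"
      have "((\<lambda>t. f t / g t) has_real_derivative (f' t * g t - f t * g' t) / (g t * g t)) (at t)"
        by (rule DERIV_divide[OF df[OF t] dg[OF t] gnz[OF t]])
      moreover have "(f' t * g t - f t * g' t) / (g t * g t) < 0"
      proof -
        have "f' t * g t - f t * g' t < 0" using W[OF t] by (simp add: algebra_simps)
        moreover have "0 < g t * g t" using gnz[OF t] not_real_square_gt_zero by blast
        ultimately show ?thesis by (simp add: divide_neg_pos)
      qed
      ultimately show "\<exists>y. ((\<lambda>t. f t / g t) has_real_derivative y) (at t) \<and> y < 0" by blast
    qed
    then show False using fa fb by simp
  qed
  have lt: False if t: "a < t1" "t1 < t2" "t2 < b" "g t1 = 0" "g t2 = 0" for t1 t2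
  proof -
    have fnz: "f t \<noteq> 0" if "t1 \<le> t" "t \<le> t2" for t using fne t that by auto
    have "(\<lambda>t. g t / f t) t1 < (\<lambda>t. g t / f t) t2"
    proof (rule DERIV_pos_imp_increasing[OF t(2)])
      fix t assume tt: "t1 \<le> t" "t \<le> t2"
      have tab: "a \<le> t" "t \<le> b" using tt t by auto
      have "((\<lambda>t. g t / f t) has_real_derivative (g' t * f t - g t * f' t) / (f t * f t)) (at t)"
        by (rule DERIV_divide[OF dg[OF tab] df[OF tab] fnz[OF tt]])
      moreover have "0 < (g' t * f t - g t * f' t) / (f t * f t)"
      proof -
        have "0 < g' t * f t - g t * f' t" using W[OF tab] by (simp add: algebra_simps)
        moreover have "0 < f t * f t" using fnz[OF tt] not_real_square_gt_zero by blast
        ultimately show ?thesis by simp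
      qed
      ultimately show "\<exists>y. ((\<lambda>t. g t / f t) has_real_derivative y) (at t) \<and> 0 < y" by blast
    qed
    then show False using t by simp
  qed
  show ?thesis
  proof (rule ex1I[where a="SOME t. a < t \<and> t < b \<and> g t = 0"])
    show "a < (SOME t. a < t \<and> t < b \<and> g t = 0) \<and> (SOME t. a < t \<and> t < b \<and> g t = 0) < b \<and> g (SOME t. a < t \<and> t < b \<and> g t = 0) = 0"
      using someI_ex[OF ex] .
    fix y assume y: "a < y \<and> y < b \<and> g y = 0"
    define s where "s = (SOME t. a < t \<and> t < b \<and> g t = 0)"
    have s: "a < s \<and> s < b \<and> g s = 0" unfolding s_def using someI_ex[OF ex] .
    show "y = (SOME t. a < t \<and> t < b \<and> g t = 0)"
      unfolding s_def[symmetric]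
    proof (rule ccontr)
      assume "y \<noteq> s"
      then have "y < s \<or> s < y" by linarith
      then show False using lt[of y s] lt[of s y] y s by blast
    qed
  qed
qed

lemma psi_H:
  assumes "n \<ge> -1" "z \<noteq> 0"
  shows "psi_plus q \<alpha> \<beta> n z = Hf q \<alpha> \<beta> (nat (n+1)) z / z"
proof -
  have i: "int (nat (n+1)) = n + 1" using assms(1) by simp
  have "z ^ nat (n+1) = z powi (int (nat (n+1)))" by (simp only: power_int_of_nat)
  also have "\<dots> = z powi (n+1)" by (simp only: i)
  also have "\<dots> = z powi n * z" using assms(2) by (rule power_int_add_1[OF disjI1])
  finally have e: "z ^ nat (n+1) = z powi n * z" .
  show ?thesis unfolding psi_plus_Ser Hf_def e using assms(2) by simp
qed

lemma Ser_minus: "Ser q \<alpha> \<beta> j (-z) = Ser q \<alpha> \<beta> j z"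
  by (simp add: Ser_def tk_def cfun_def)



theorem propositionB2:
  fixes q \<alpha> \<beta> :: real and n :: int
  assumes "0 < q" "q < 1" "-1 < \<alpha>" "\<alpha> < 1" "\<beta> < 1" "n \<ge> -1"
  defines "D \<equiv> {z::complex. 0 < norm z \<and> norm z < 1}"
  shows "psi_plus q \<alpha> \<beta> n analytic_on D
    \<and> (\<forall>z\<in>D. psi_plus q \<alpha> \<beta> n z = 0 \<longrightarrow>
          z \<in> \<real> \<and> deriv (psi_plus q \<alpha> \<beta> n) z \<noteq> 0 \<and> psi_plus q \<alpha> \<beta> n (-z) = 0)
    \<and> (\<forall>x1 x2::real. 0 < x1 \<and> x1 < x2 \<and> x2 < 1
          \<and> psi_plus q \<alpha> \<beta> n (of_real x1) = 0 \<and> psi_plus q \<alpha> \<beta> n (of_real x2) = 0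
          \<and> (\<forall>t. x1 < t \<and> t < x2 \<longrightarrow> psi_plus q \<alpha> \<beta> n (of_real t) \<noteq> 0)
        \<longrightarrow> (\<exists>!t. x1 < t \<and> t < x2 \<and> psi_plus q \<alpha> \<beta> (n+1) (of_real t) = 0))"
proof -
  note ctx = assms(1-5)
  define j0 where "j0 = nat (n+1)"
  have psiH: "psi_plus q \<alpha> \<beta> n z = Hf q \<alpha> \<beta> j0 z / z" if "z \<noteq> 0" for z
    using psi_H[OF assms(6) that] unfolding j0_def .
  have jS: "nat (n + 1 + 1) = Suc j0" unfolding j0_def using assms(6) by simp
  have psiH1: "psi_plus q \<alpha> \<beta> (n+1) z = Hf q \<alpha> \<beta> (Suc j0) z / z" if "z \<noteq> 0" for z
    using psi_H[of "n+1" z q \<alpha> \<beta>] assms(6) that unfolding jS by simp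
  have Deq: "D = ball 0 1 - {0}" unfolding D_def by auto
  have openD: "open D" unfolding Deq by auto
  have Hreal: "Hf q \<alpha> \<beta> j (of_real t) = of_real (Re (Hf q \<alpha> \<beta> j (of_real t)))" if "\<bar>t\<bar> < 1" for j t
    using H_real[OF ctx, of t j] that by (simp add: complex_is_Real_iff complex_eq_iff)
  have P1: "psi_plus q \<alpha> \<beta> n analytic_on D"
  proof -
    have "(\<lambda>z. Hf q \<alpha> \<beta> j0 z / z) holomorphic_on D"
      using H_holo[OF ctx, of j0] unfolding Deq
      by (intro holomorphic_on_divide holomorphic_intros) (auto intro: holomorphic_on_subset)
    then have "psi_plus q \<alpha> \<beta> n holomorphic_on D"
      by (rule holomorphic_cong[THEN iffD1, rotated 2]) (auto simp: D_def psiH)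
    then show ?thesis using openD by (simp add: analytic_on_open)
  qed
  have P2: "z \<in> \<real> \<and> deriv (psi_plus q \<alpha> \<beta> n) z \<noteq> 0 \<and> psi_plus q \<alpha> \<beta> n (-z) = 0"
    if zD: "z \<in> D" and z0: "psi_plus q \<alpha> \<beta> n z = 0" for z
  proof -
    have znz: "z \<noteq> 0" and zn1: "norm z < 1" using zD unfolding D_def by auto
    have Hz: "Hf q \<alpha> \<beta> j0 z = 0" using z0 psiH[OF znz] znz by simp
    have Imz: "Im z = 0" by (rule H_zero_real[OF ctx zn1 znz Hz])
    then have zR: "z \<in> \<real>" by (simp add: complex_is_Real_iff)
    define x where "x = Re z"
    have zx: "z = of_real x" unfolding x_def using Imz by (simp add: complex_eq_iff)
    have x0: "x \<noteq> 0" using znz zx by auto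
    have x1: "\<bar>x\<bar> < 1" using zn1 zx by simp
    define d where "d = deriv (Hf q \<alpha> \<beta> j0) z"
    have "((\<lambda>u. Hf q \<alpha> \<beta> j0 u / u) has_field_derivative (d * z - Hf q \<alpha> \<beta> j0 z * 1) / (z * z)) (at z)"
      unfolding d_def by (rule DERIV_divide[OF H_deriv[OF ctx zn1] DERIV_ident znz])
    then have "((\<lambda>u. Hf q \<alpha> \<beta> j0 u / u) has_field_derivative d / z) (at z)"
      using Hz znz by (simp add: field_simps power2_eq_square)
    then have "(psi_plus q \<alpha> \<beta> n has_field_derivative d / z) (at z)"
    proof (rule has_field_derivative_transform_within_open[OF _ openD zD])
      fix u assume "u \<in> D"
      then have "u \<noteq> 0" unfolding D_def by auto
      then show "Hf q \<alpha> \<beta> j0 u / u = psi_plus q \<alpha> \<beta> n u" using psiH by simp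
    qed
    then have dpsi: "deriv (psi_plus q \<alpha> \<beta> n) z = d / z" by (rule DERIV_imp_deriv)
    have "0 < Re (Hf q \<alpha> \<beta> j0 (of_real x) * deriv (Hf q \<alpha> \<beta> (Suc j0)) (of_real x)
              - Hf q \<alpha> \<beta> (Suc j0) (of_real x) * deriv (Hf q \<alpha> \<beta> j0) (of_real x))"
      by (rule H_wronski[OF ctx x0 x1])
    then have "0 < Re (- (Hf q \<alpha> \<beta> (Suc j0) z * d))" using Hz unfolding zx d_def by simp
    then have dnz: "d \<noteq> 0" by auto
    have "deriv (psi_plus q \<alpha> \<beta> n) z \<noteq> 0" unfolding dpsi using dnz znz by simp
    moreover have "psi_plus q \<alpha> \<beta> n (-z) = 0"
    proof -
      have "Ser q \<alpha> \<beta> (nat (n+1)) z = 0" using z0 znz unfolding psi_plus_Ser by simp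
      then show ?thesis unfolding psi_plus_Ser Ser_minus by simp
    qed
    ultimately show ?thesis using zR by blast
  qed
  have P3: "\<exists>!t. x1 < t \<and> t < x2 \<and> psi_plus q \<alpha> \<beta> (n+1) (of_real t) = 0"
    if h: "0 < x1" "x1 < x2" "x2 < 1" "psi_plus q \<alpha> \<beta> n (of_real x1) = 0" "psi_plus q \<alpha> \<beta> n (of_real x2) = 0"
          "\<forall>t. x1 < t \<and> t < x2 \<longrightarrow> psi_plus q \<alpha> \<beta> n (of_real t) \<noteq> 0" for x1 x2
  proof -
    define f where "f = (\<lambda>t. Re (Hf q \<alpha> \<beta> j0 (of_real t)))"
    define g where "g = (\<lambda>t. Re (Hf q \<alpha> \<beta> (Suc j0) (of_real t)))"
    define f' where "f' = (\<lambda>t. Re (deriv (Hf q \<alpha> \<beta> j0) (of_real t)))"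
    define g' where "g' = (\<lambda>t. Re (deriv (Hf q \<alpha> \<beta> (Suc j0)) (of_real t)))"
    have dH: "((\<lambda>t. Re (Hf q \<alpha> \<beta> j (of_real t))) has_real_derivative Re (deriv (Hf q \<alpha> \<beta> j) (of_real t))) (at t)"
      if "\<bar>t\<bar> < 1" for j t
    proof -
      have "norm (of_real t :: complex) < 1" using that by simp
      then have "((\<lambda>t. Hf q \<alpha> \<beta> j (of_real t)) has_vector_derivative deriv (Hf q \<alpha> \<beta> j) (of_real t)) (at t)"
        by (intro has_vector_derivative_real_field H_deriv[OF ctx])
      then show ?thesis by (rule has_field_derivative_Re)
    qed
    have tI: "\<bar>t\<bar> < 1" "t \<noteq> 0" if "x1 \<le> t" "t \<le> x2" for t using that h by auto
    have fz: "psi_plus q \<alpha> \<beta> n (of_real t) = 0 \<longleftrightarrow> f t = 0" if "\<bar>t\<bar> < 1" "t \<noteq> 0" for t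
    proof -
      have "psi_plus q \<alpha> \<beta> n (of_real t) = of_real (f t) / of_real t"
        using psiH[of "of_real t"] Hreal[OF that(1), of j0] that(2) unfolding f_def by simp
      then show ?thesis using that(2) by simp
    qed
    have gz: "psi_plus q \<alpha> \<beta> (n+1) (of_real t) = 0 \<longleftrightarrow> g t = 0" if "\<bar>t\<bar> < 1" "t \<noteq> 0" for t
    proof -
      have "psi_plus q \<alpha> \<beta> (n+1) (of_real t) = of_real (g t) / of_real t"
        using psiH1[of "of_real t"] Hreal[OF that(1), of "Suc j0"] that(2) unfolding g_def by simp
      then show ?thesis using that(2) by simp
    qed
    have "\<exists>!t. x1 < t \<and> t < x2 \<and> g t = 0"
    proof (rule sturm_interlace[where f=f and g=g and f'=f' and g'=g'])
      show "x1 < x2" by (rule h(2))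
      show "(f has_real_derivative f' t) (at t)" if "x1 \<le> t" "t \<le> x2" for t
        unfolding f_def f'_def by (rule dH[OF tI(1)[OF that]])
      show "(g has_real_derivative g' t) (at t)" if "x1 \<le> t" "t \<le> x2" for t
        unfolding g_def g'_def by (rule dH[OF tI(1)[OF that]])
      show "0 < f t * g' t - g t * f' t" if "x1 \<le> t" "t \<le> x2" for t
      proof -
        have "0 < Re (Hf q \<alpha> \<beta> j0 (of_real t) * deriv (Hf q \<alpha> \<beta> (Suc j0)) (of_real t)
              - Hf q \<alpha> \<beta> (Suc j0) (of_real t) * deriv (Hf q \<alpha> \<beta> j0) (of_real t))"
          by (rule H_wronski[OF ctx tI(2)[OF that] tI(1)[OF that]])
        then show ?thesis
          unfolding f_def g_def f'_def g'_def
          by (subst (asm) Hreal[OF tI(1)[OF that], of j0], subst (asm) Hreal[OF tI(1)[OF that], of "Suc j0"]) simp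
      qed
      show "f x1 = 0" using fz[OF tI[of x1]] h by auto
      show "f x2 = 0" using fz[OF tI[of x2]] h by auto
      show "f t \<noteq> 0" if "x1 < t" "t < x2" for t using fz[OF tI[of t]] h that by auto
    qed
    moreover have "(x1 < t \<and> t < x2 \<and> g t = 0) \<longleftrightarrow> (x1 < t \<and> t < x2 \<and> psi_plus q \<alpha> \<beta> (n+1) (of_real t) = 0)" for t
      using gz[OF tI[of t]] by auto
    ultimately show ?thesis by simp
  qed
  show ?thesis using P1 P2 P3 by blast
qed


end
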